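(* Let $n,m\geq 1$, $k=(k_1,\dots,k_n)\in\mathbb{Z}_{\geq1}^n$, $u=(u_1,\dots,u_m)\in\mathbb{Z}_{\geq0}^m$, $T\geq 0$, and for each $e\in[m]$ let $c_e:\mathbb{Z}_{\ge0}\to\mathbb{R}$ be non-decreasing. Let $K=\sum_ik_i$, $K_2=\sum_i k_i(k_i-1)$, $k!=\prod_ik_i!$, $L(k,u)=\{\alpha\in\mathbb{Z}^m:0\leq\alpha\leq u,\ |\alpha|=K\}$ and $\bar\Phi(\alpha)=\sum_{e=1}^m\sum_{j=1}^{\alpha_e}c_e(j)$. Then the $K$-homogeneous polynomial in $m$ variables $$g(x_1,\dots,x_m)=\sum_{\alpha\in L(k,u)}\frac{K!}{k!\,\alpha!}\exp\Big(-\frac{K_2}{K^2}\sum_{j=1}^m\alpha_j(\alpha_j-1)\Big)\exp\big(-T\bar\Phi(\alpha)\big)\,x^\alpha$$ is strongly log-concave.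
   Context: Notation: $|\alpha|=\sum_j\alpha_j$, $\alpha!=\prod_j\alpha_j!$, $x^\alpha=\prod_jx_j^{\alpha_j}$, $0\le\alpha\le u$ coordinatewise. This polynomial arises from $u$-capacitated $k$-uniform congestion games (player $i$ chooses any $k_i$-subset of resources $[m]$, resource $e$ can be used by at most $u_e$ players). A polynomial $p$ with non-negative coefficients is log-concave on $\mathbb{R}^m_{>0}$ if the Hessian of $\log p$ is negative semidefinite there (the zero polynomial is considered log-concave); $p$ is strongly log-concave (SLC) if $\partial^\beta p=\prod_i\partial_{x_i}^{\beta_i}p$ is log-concave for every $\beta\in\mathbb{Z}^m_{\geq0}$. *)

theory Defs
  imports Complex_Main
begin

text \<open>A polynomial in the variables x_j (j ranging over the finite type 'm) with real
coefficients is represented by its coefficient function on exponent vectors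
alpha :: 'm => nat (finitely supported in all uses below).\<close>

type_synonym 'm mpoly_coeffs = "('m \<Rightarrow> nat) \<Rightarrow> real"

definition mpoly_eval :: "'m::finite mpoly_coeffs \<Rightarrow> ('m \<Rightarrow> real) \<Rightarrow> real" where
  "mpoly_eval p x = (\<Sum>\<alpha>\<in>{\<alpha>. p \<alpha> \<noteq> 0}. p \<alpha> * (\<Prod>j\<in>UNIV. x j ^ \<alpha> j))"

definition pdiff :: "'m \<Rightarrow> 'm mpoly_coeffs \<Rightarrow> 'm mpoly_coeffs" where
  "pdiff i p = (\<lambda>\<alpha>. real (\<alpha> i + 1) * p (\<alpha>(i := \<alpha> i + 1)))"

definition pdiffs :: "('m::finite \<Rightarrow> nat) \<Rightarrow> 'm mpoly_coeffs \<Rightarrow> 'm mpoly_coeffs" where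
  "pdiffs \<beta> p = (\<lambda>\<alpha>. (\<Prod>j\<in>UNIV. pochhammer (real (\<alpha> j + 1)) (\<beta> j)) * p (\<lambda>j. \<alpha> j + \<beta> j))"

definition hess_log :: "'m::finite mpoly_coeffs \<Rightarrow> ('m \<Rightarrow> real) \<Rightarrow> 'm \<Rightarrow> 'm \<Rightarrow> real" where
  "hess_log p x i j =
     (mpoly_eval p x * mpoly_eval (pdiff i (pdiff j p)) x
      - mpoly_eval (pdiff i p) x * mpoly_eval (pdiff j p) x) / (mpoly_eval p x)^2"

definition neg_semidef :: "('m::finite \<Rightarrow> 'm \<Rightarrow> real) \<Rightarrow> bool" where
  "neg_semidef H \<longleftrightarrow> (\<forall>v::'m \<Rightarrow> real. (\<Sum>i\<in>UNIV. \<Sum>j\<in>UNIV. v i * H i j * v j) \<le> 0)"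

definition log_concave_poly :: "'m::finite mpoly_coeffs \<Rightarrow> bool" where
  "log_concave_poly p \<longleftrightarrow> (\<forall>\<alpha>. p \<alpha> = 0) \<or>
     (\<forall>x. (\<forall>j. 0 < x j) \<longrightarrow> 0 < mpoly_eval p x \<and> neg_semidef (hess_log p x))"

definition strongly_log_concave :: "'m::finite mpoly_coeffs \<Rightarrow> bool" where
  "strongly_log_concave p \<longleftrightarrow> (\<forall>\<beta>. log_concave_poly (pdiffs \<beta> p))"

definition Phi_bar :: "('m::finite \<Rightarrow> nat \<Rightarrow> real) \<Rightarrow> ('m \<Rightarrow> nat) \<Rightarrow> real" where
  "Phi_bar c \<alpha> = (\<Sum>e\<in>UNIV. \<Sum>j=1..\<alpha> e. c e j)"

definition cong_poly ::
  "('n::finite \<Rightarrow> nat) \<Rightarrow> ('m::finite \<Rightarrow> nat) \<Rightarrow> real \<Rightarrow> ('m \<Rightarrow> nat \<Rightarrow> real) \<Rightarrow> 'm mpoly_coeffs" where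
  "cong_poly k u T c = (\<lambda>\<alpha>.
     (let K = (\<Sum>i\<in>UNIV. k i);
          K2 = (\<Sum>i\<in>UNIV. real (k i) * (real (k i) - 1))
      in if (\<forall>e. \<alpha> e \<le> u e) \<and> (\<Sum>e\<in>UNIV. \<alpha> e) = K
         then fact K / ((\<Prod>i\<in>UNIV. fact (k i)) * (\<Prod>e\<in>UNIV. fact (\<alpha> e)))
              * exp (- (K2 / (real K)^2) * (\<Sum>j\<in>UNIV. real (\<alpha> j) * (real (\<alpha> j) - 1)))
              * exp (- T * Phi_bar c \<alpha>)
         else 0))"

end

theory Submission
  imports Defs "HOL-Analysis.Analysis"
begin
lemma cont_coord[continuous_intros]: "continuous_on S (\<lambda>x::'a\<Rightarrow>real. x i)"
  by (rule continuous_on_subset[OF continuous_on_product_coordinates]) simp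

definition bil :: "('m::finite \<Rightarrow> 'm \<Rightarrow> real) \<Rightarrow> ('m \<Rightarrow> real) \<Rightarrow> ('m \<Rightarrow> real) \<Rightarrow> real" where
  "bil H a b = (\<Sum>i\<in>UNIV. \<Sum>j\<in>UNIV. a i * H i j * b j)"

definition hv :: "('m::finite \<Rightarrow> 'm \<Rightarrow> real) \<Rightarrow> ('m \<Rightarrow> real) \<Rightarrow> 'm \<Rightarrow> real" where
  "hv H b i = (\<Sum>j\<in>UNIV. H i j * b j)"

lemma bil_hv: "bil H a b = (\<Sum>i\<in>UNIV. a i * hv H b i)"
  by (simp add: bil_def hv_def sum_distrib_left mult.assoc)

lemma bil_sym: assumes "\<And>i j. H i j = H j i" shows "bil H a b = bil H b a"
  unfolding bil_def
  by (subst sum.swap) (simp add: assms mult.commute mult.left_commute)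

lemma bil_add1: "bil H (\<lambda>i. a i + b i) c = bil H a c + bil H b c"
  by (simp add: bil_def distrib_right sum.distrib)
lemma bil_add2: "bil H c (\<lambda>i. a i + b i) = bil H c a + bil H c b"
  by (simp add: bil_def distrib_left sum.distrib)
lemma bil_smult1: "bil H (\<lambda>i. t * a i) c = t * bil H a c"
  by (simp add: bil_def sum_distrib_left mult.assoc)
lemma bil_smult2: "bil H c (\<lambda>i. t * a i) = t * bil H c a"
  unfolding bil_def sum_distrib_left by (intro sum.cong refl) (simp add: sum_distrib_left algebra_simps)

lemma bil_expand:
  "bil H (\<lambda>i. a i + t * b i) (\<lambda>i. a i + t * b i) = bil H a a + t * (bil H a b + bil H b a) + t^2 * bil H b b"
  by (simp add: bil_add1 bil_add2 bil_smult1 bil_smult2 algebra_simps power2_eq_square)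

lemma bil_scale: "bil H (\<lambda>i. c * a i) (\<lambda>i. c * a i) = c^2 * bil H a a"
  by (simp add: bil_def algebra_simps sum_distrib_left power2_eq_square)

lemma quad_zero:
  fixes a b :: real
  assumes "\<And>t. a * t + b * t^2 \<le> 0"
  shows "a = 0"
proof -
  define s where "s = 1 / (\<bar>b\<bar> + 1)"
  have s: "s > 0" "\<bar>b\<bar> * s < 1" unfolding s_def by (auto simp: field_simps)
  have "-\<bar>b\<bar> * s \<le> b * s" by (rule mult_right_mono) (use s(1) in auto)
  hence "1 + b * s > 0" using s by linarith
  have "a * (a * s) + b * (a * s)^2 \<le> 0" using assms by blast
  hence "a^2 * s * (1 + b * s) \<le> 0" by (simp add: algebra_simps power2_eq_square)
  moreover have "a^2 * s * (1 + b * s) \<ge> 0" using s \<open>1 + b * s > 0\<close> by simp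
  ultimately have "a^2 * s * (1 + b * s) = 0" by linarith
  thus "a = 0" using s \<open>1 + b * s > 0\<close> by simp
qed

lemma discr:
  fixes P Q R t :: real
  assumes "R > 0" "P - 2*t*Q + t^2 * R \<le> 0"
  shows "P * R \<le> Q^2"
proof -
  have "R * (P - 2*t*Q + t^2*R) = (t*R - Q)^2 + P*R - Q^2" by (simp add: algebra_simps power2_eq_square)
  moreover have "R * (P - 2*t*Q + t^2*R) \<le> 0" using assms by (simp add: mult_nonneg_nonpos)
  ultimately show ?thesis using zero_le_power2[of "t*R-Q"] by linarith
qed

lemma core_lemma:
  fixes H :: "'m::finite \<Rightarrow> 'm \<Rightarrow> real" and x :: "'m \<Rightarrow> real" and A :: "'m set"
  assumes sym: "\<And>i j. H i j = H j i"
    and zero: "\<And>i j. i \<notin> A \<Longrightarrow> H i j = 0"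
    and pos: "\<And>i j. i \<in> A \<Longrightarrow> j \<in> A \<Longrightarrow> i \<noteq> j \<Longrightarrow> 0 < H i j"
    and xpos: "\<And>i. 0 < x i"
    and ypos: "\<And>i. i \<in> A \<Longrightarrow> 0 < hv H x i"
    and hash: "\<And>v. bil H v v \<le> (\<Sum>i\<in>A. x i * (hv H v i)^2 / hv H x i)"
    and v0: "(\<Sum>i\<in>UNIV. hv H x i * v0 i) = 0"
  shows "bil H v0 v0 \<le> 0"
proof (rule ccontr)
  assume "\<not> bil H v0 v0 \<le> 0"
  hence f0: "bil H v0 v0 > 0" by simp
  define y where "y = hv H x"
  define N where "N = (\<lambda>v. \<Sum>i\<in>A. y i * (v i)^2 / x i)"
  define rs where "rs = (\<lambda>v i. if i \<in> A then v i else (0::real))"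
  have zero2: "H i j = 0" if "j \<notin> A" for i j using zero[OF that] sym by metis
  have hv0: "hv H v i = 0" if "i \<notin> A" for v i using zero[OF that] by (simp add: hv_def)
  have y0: "y i = 0" if "i \<notin> A" for i using hv0[OF that] y_def by simp
  have ypos': "0 < y i" if "i \<in> A" for i using ypos[OF that] y_def by simp
  have bil_rs: "bil H (rs v) (rs v) = bil H v v" for v
    unfolding bil_def rs_def by (intro sum.cong refl) (auto simp: zero zero2)
  have sumA: "(\<Sum>i\<in>UNIV. y i * v i) = (\<Sum>i\<in>A. y i * v i)" for v
    by (rule sum.mono_neutral_right) (auto simp: y0)
  have Nnn: "N v \<ge> 0" for v unfolding N_def
    by (intro sum_nonneg) (auto intro!: divide_nonneg_pos mult_nonneg_nonneg ypos'[THEN less_imp_le] xpos)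
  have N0: "v i = 0" if "N v = 0" "i \<in> A" for v i
  proof -
    have "\<forall>i\<in>A. y i * (v i)^2 / x i = 0"
      using that(1) unfolding N_def
      by (subst sum_nonneg_eq_0_iff[symmetric]) (auto intro!: divide_nonneg_pos mult_nonneg_nonneg ypos'[THEN less_imp_le] xpos)
    thus ?thesis using that(2) ypos'[OF that(2)] xpos[of i] by auto
  qed
  have Nscale: "N (\<lambda>i. c * v i) = c^2 * N v" for c v
    unfolding N_def sum_distrib_left by (intro sum.cong refl) (simp add: power_mult_distrib)
  have bilN0: "bil H v v = 0" if "N v = 0" for v
  proof -
    have "rs v = (\<lambda>_. 0)" using N0[OF that] unfolding rs_def by auto
    hence "bil H (rs v) (rs v) = 0" by (simp add: bil_def)
    thus ?thesis by (simp add: bil_rs)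
  qed
  define S where "S = {v. (\<forall>i. v i * (if i \<in> A then 0 else 1) = 0) \<and> (\<Sum>i\<in>UNIV. y i * v i) = 0 \<and> N v = 1}"
  define b where "b = 1 + (\<Sum>i\<in>A. x i / y i)"
  have Ssub: "S \<subseteq> PiE UNIV (\<lambda>i. {-b..b})"
  proof
    fix v assume "v \<in> S"
    hence off: "\<And>i. i \<notin> A \<Longrightarrow> v i = 0" and Nv: "N v = 1" unfolding S_def by (auto split: if_splits)
    have "\<bar>v i\<bar> \<le> b" for i
    proof (cases "i \<in> A")
      case False thus ?thesis using off[OF False] unfolding b_def
        by (simp add: add_nonneg_nonneg sum_nonneg divide_nonneg_pos ypos' xpos less_imp_le)
    next
      case True
      have "y i * (v i)^2 / x i \<le> N v" unfolding N_def
        by (rule member_le_sum[OF True]) (auto intro!: divide_nonneg_pos mult_nonneg_nonneg ypos'[THEN less_imp_le] xpos)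
      hence "y i * (v i)^2 / x i \<le> 1" using Nv by simp
      hence "(v i)^2 \<le> x i / y i" using ypos'[OF True] xpos[of i] by (simp add: field_simps)
      moreover have "x i / y i \<le> (\<Sum>i\<in>A. x i / y i)"
        by (rule member_le_sum[OF True]) (auto intro!: divide_nonneg_pos ypos' xpos less_imp_le divide_pos_pos)
      moreover have "\<bar>v i\<bar> \<le> 1 + (v i)^2"
      proof (cases "\<bar>v i\<bar> \<le> 1")
        case True thus ?thesis using zero_le_power2[of "v i"] by linarith
      next
        case False
        hence "\<bar>v i\<bar> * 1 \<le> \<bar>v i\<bar> * \<bar>v i\<bar>" by (intro mult_left_mono) auto
        thus ?thesis by (simp add: power2_eq_square abs_mult_self_eq)
      qed
      ultimately show ?thesis unfolding b_def by linarith
    qed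
    hence "\<And>i. -b \<le> v i \<and> v i \<le> b" by (metis abs_le_D1 abs_le_D2 minus_le_iff)
    thus "v \<in> PiE UNIV (\<lambda>i. {-b..b})" by auto
  qed
  have compS: "compact S"
  proof -
    have "compactin (product_topology (\<lambda>i. euclidean) UNIV) (PiE (UNIV::'m set) (\<lambda>i. {-b..b}))"
      by (simp add: compactin_PiE)
    hence c1: "compact (PiE (UNIV::'m set) (\<lambda>i. {-b..b}))" by (simp add: euclidean_product_topology)
    have "closed S" unfolding S_def N_def
      by (intro closed_Collect_conj closed_Collect_all closed_Collect_eq continuous_intros) (use xpos in \<open>auto simp: less_imp_neq[symmetric]\<close>)
    hence "compact (PiE UNIV (\<lambda>i. {-b..b}) \<inter> S)" using c1 by (rule compact_Int_closed[rotated])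
    thus ?thesis using Ssub by (simp add: Int_absorb1)
  qed
  have sumy0: "(\<Sum>i\<in>UNIV. y i * v0 i) = 0" using v0 y_def by simp
  have Npos0: "N (rs v0) > 0"
  proof -
    have "N (rs v0) \<noteq> 0" using bilN0[of "rs v0"] f0 bil_rs by auto
    thus ?thesis using Nnn[of "rs v0"] by linarith
  qed
  define c0 where "c0 = 1 / sqrt (N (rs v0))"
  define v1 where "v1 = (\<lambda>i. c0 * rs v0 i)"
  have c0sq: "c0^2 * N (rs v0) = 1" unfolding c0_def using Npos0 by (simp add: power_divide)
  have v1S: "v1 \<in> S"
  proof -
    have "(\<Sum>i\<in>UNIV. y i * v1 i) = c0 * (\<Sum>i\<in>UNIV. y i * rs v0 i)"
      unfolding v1_def sum_distrib_left by (simp add: algebra_simps)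
    also have "(\<Sum>i\<in>UNIV. y i * rs v0 i) = (\<Sum>i\<in>UNIV. y i * v0 i)"
      by (intro sum.cong refl) (auto simp: rs_def y0)
    finally have "(\<Sum>i\<in>UNIV. y i * v1 i) = 0" using sumy0 by simp
    moreover have "N v1 = 1" unfolding v1_def Nscale using c0sq .
    ultimately show ?thesis unfolding S_def v1_def rs_def by auto
  qed
  have contf: "continuous_on S (\<lambda>v. bil H v v)" unfolding bil_def by (intro continuous_intros)
  obtain vs where vsS: "vs \<in> S" and vsmax: "\<And>v. v \<in> S \<Longrightarrow> bil H v v \<le> bil H vs vs"
    using continuous_attains_sup[OF compS _ contf] v1S by (metis empty_iff)
  define lam where "lam = bil H vs vs"
  have vs_off: "vs i = 0" if "i \<notin> A" for i
  proof -
    have "vs i * (if i \<in> A then 0 else 1) = 0" using vsS unfolding S_def by blast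
    thus ?thesis using that by simp
  qed
  have vs_y: "(\<Sum>i\<in>UNIV. y i * vs i) = 0" and vs_N: "N vs = 1" using vsS unfolding S_def by auto
  have lampos: "lam > 0"
  proof -
    have "bil H v1 v1 = c0^2 * bil H v0 v0" unfolding v1_def bil_scale bil_rs ..
    moreover have "c0 > 0" unfolding c0_def using Npos0 by simp
    ultimately have "bil H v1 v1 > 0" using f0 by simp
    thus ?thesis using vsmax[OF v1S] lam_def by simp
  qed
  have K: "bil H w w \<le> lam * N w" if woff: "\<And>i. i \<notin> A \<Longrightarrow> w i = 0" and wy: "(\<Sum>i\<in>UNIV. y i * w i) = 0" for w
  proof (cases "N w = 0")
    case True thus ?thesis using bilN0 by simp
  next
    case False
    hence Np: "N w > 0" using Nnn[of w] by simp
    define c where "c = 1 / sqrt (N w)"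
    have csq: "c^2 * N w = 1" unfolding c_def using Np by (simp add: power_divide)
    have "(\<lambda>i. c * w i) \<in> S"
    proof -
      have "(\<Sum>i\<in>UNIV. y i * (c * w i)) = c * (\<Sum>i\<in>UNIV. y i * w i)"
        unfolding sum_distrib_left by (simp add: algebra_simps)
      thus ?thesis unfolding S_def using wy woff Nscale[of c w] csq by auto
    qed
    hence "c^2 * bil H w w \<le> lam" using vsmax lam_def bil_scale by metis
    hence "c^2 * bil H w w * N w \<le> lam * N w" using Np by (simp add: mult_right_mono)
    moreover have "c^2 * bil H w w * N w = bil H w w" using csq by (simp add: algebra_simps)
    ultimately show ?thesis by simp
  qed
  define q where "q = (\<lambda>i. hv H vs i - lam * y i * vs i / x i)"
  define h where "h = (\<lambda>i. if i \<in> A then q i * x i / y i else 0)"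
  have h_off: "h i = 0" if "i \<notin> A" for i using that h_def by simp
  have sumAU: "(\<Sum>i\<in>A. f i) = (\<Sum>i\<in>UNIV. f i)" if "\<And>i. i \<notin> A \<Longrightarrow> f i = 0" for f :: "'m \<Rightarrow> real"
    by (rule sum.mono_neutral_left) (auto simp: that)
  have xhv: "(\<Sum>i\<in>UNIV. x i * hv H vs i) = 0"
  proof -
    have "(\<Sum>i\<in>UNIV. x i * hv H vs i) = bil H x vs" by (simp add: bil_hv)
    also have "\<dots> = bil H vs x" by (rule bil_sym[OF sym])
    also have "\<dots> = (\<Sum>i\<in>UNIV. y i * vs i)" by (simp add: bil_hv y_def mult.commute)
    finally show ?thesis using vs_y by simp
  qed
  have hy: "(\<Sum>i\<in>UNIV. y i * h i) = 0"
  proof -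
    have "(\<Sum>i\<in>UNIV. y i * h i) = (\<Sum>i\<in>A. y i * h i)" by (rule sumAU[symmetric]) (simp add: h_off)
    also have "\<dots> = (\<Sum>i\<in>A. x i * hv H vs i - lam * (y i * vs i))"
      apply (intro sum.cong refl)
      subgoal for i using ypos'[of i] xpos[of i] by (simp add: h_def q_def field_simps)
      done
    also have "\<dots> = (\<Sum>i\<in>A. x i * hv H vs i) - lam * (\<Sum>i\<in>A. y i * vs i)"
      by (simp add: sum_subtractf sum_distrib_left)
    also have "(\<Sum>i\<in>A. x i * hv H vs i) = (\<Sum>i\<in>UNIV. x i * hv H vs i)" by (rule sumAU) (simp add: hv0)
    also have "(\<Sum>i\<in>A. y i * vs i) = (\<Sum>i\<in>UNIV. y i * vs i)" by (rule sumAU) (simp add: y0)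
    finally show ?thesis using xhv vs_y by simp
  qed
  define B' where "B' = (\<Sum>i\<in>A. y i * vs i * h i / x i)"
  have Nexp: "N (\<lambda>i. vs i + t * h i) = N vs + t * (2 * B') + t^2 * N h" for t
    unfolding N_def B'_def by (simp add: sum.distrib sum_distrib_left algebra_simps power2_eq_square add_divide_distrib diff_divide_distrib)
  have "\<And>t. (2 * bil H h vs - lam * (2 * B')) * t + (bil H h h - lam * N h) * t^2 \<le> 0"
  proof -
    fix t
    have "bil H (\<lambda>i. vs i + t * h i) (\<lambda>i. vs i + t * h i) \<le> lam * N (\<lambda>i. vs i + t * h i)"
    proof (rule K)
      show "\<And>i. i \<notin> A \<Longrightarrow> vs i + t * h i = 0" by (simp add: vs_off h_off)
      have "(\<Sum>i\<in>UNIV. y i * (vs i + t * h i)) = (\<Sum>i\<in>UNIV. y i * vs i) + t * (\<Sum>i\<in>UNIV. y i * h i)"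
        by (simp add: sum.distrib sum_distrib_left algebra_simps)
      thus "(\<Sum>i\<in>UNIV. y i * (vs i + t * h i)) = 0" using vs_y hy by simp
    qed
    moreover have "bil H (\<lambda>i. vs i + t * h i) (\<lambda>i. vs i + t * h i) = lam + t * (2 * bil H h vs) + t^2 * bil H h h"
      unfolding bil_expand lam_def using bil_sym[OF sym, where a=vs and b=h] by simp
    ultimately show "(2 * bil H h vs - lam * (2 * B')) * t + (bil H h h - lam * N h) * t^2 \<le> 0"
      unfolding Nexp vs_N by (simp add: algebra_simps)
  qed
  hence eq1: "bil H h vs = lam * B'" using quad_zero by fastforce
  have "bil H h vs - lam * B' = (\<Sum>i\<in>A. x i / y i * (q i)^2)"
  proof -
    have "bil H h vs = (\<Sum>i\<in>A. h i * hv H vs i)" by (simp add: bil_hv sumAU h_off)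
    hence "bil H h vs - lam * B' = (\<Sum>i\<in>A. h i * hv H vs i - lam * (y i * vs i * h i / x i))"
      by (simp add: B'_def sum_subtractf sum_distrib_left)
    also have "\<dots> = (\<Sum>i\<in>A. x i / y i * (q i)^2)"
      apply (intro sum.cong refl)
      subgoal for i using ypos'[of i] xpos[of i] by (simp add: h_def q_def field_simps power2_eq_square)
      done
    finally show ?thesis .
  qed
  hence "(\<Sum>i\<in>A. x i / y i * (q i)^2) = 0" using eq1 by simp
  hence "\<forall>i\<in>A. x i / y i * (q i)^2 = 0"
    by (subst sum_nonneg_eq_0_iff[symmetric]) (auto intro!: mult_nonneg_nonneg divide_nonneg_pos xpos[THEN less_imp_le] ypos')
  hence eig: "hv H vs i = lam * y i * vs i / x i" if "i \<in> A" for i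
    using that xpos[of i] ypos'[OF that] unfolding q_def by auto
  have "lam \<le> (\<Sum>i\<in>A. x i * (hv H vs i)^2 / hv H x i)" using hash[of vs] lam_def by simp
  also have "\<dots> = (\<Sum>i\<in>A. lam^2 * (y i * (vs i)^2 / x i))"
    apply (intro sum.cong refl)
    subgoal for i
    proof -
      assume iA: "i \<in> A"
      have yp: "y i > 0" and xp: "x i > 0" using ypos'[OF iA] xpos[of i] by auto
      have E: "x i * hv H vs i = lam * vs i * y i" using eig[OF iA] xp by (simp add: field_simps)
      have "x i * (hv H vs i)^2 / hv H x i = (x i * hv H vs i)^2 / (x i * y i)"
        using xp yp by (simp add: y_def power2_eq_square field_simps)
      also have "\<dots> = (lam * vs i * y i)^2 / (x i * y i)" using E by simp
      also have "\<dots> = lam^2 * (y i * (vs i)^2 / x i)" using xp yp by (simp add: power2_eq_square field_simps)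
      finally show ?thesis .
    qed
    done
  also have "\<dots> = lam^2 * N vs" unfolding N_def by (rule sum_distrib_left[symmetric])
  also have "\<dots> = lam^2" using vs_N by simp
  finally have "lam \<le> lam^2" .
  hence lam1: "lam \<ge> 1" using lampos by (simp add: power2_eq_square)
  have Ane: "A \<noteq> {}" using vs_N N_def by auto
  define r where "r = (\<lambda>j. vs j / x j)"
  define M where "M = Max (r ` A)"
  have "M \<in> r ` A" unfolding M_def using Ane by (intro Max_in) auto
  then obtain i0 where i0: "i0 \<in> A" "r i0 = M" by auto
  have Mge: "r j \<le> M" if "j \<in> A" for j unfolding M_def using that by (intro Max_ge) auto
  have Mpos: "M > 0"
  proof (rule ccontr)
    assume "\<not> M > 0"
    hence "vs j \<le> 0" if "j \<in> A" for j
    proof -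
      have "vs j / x j \<le> 0" using Mge[OF that] \<open>\<not> M > 0\<close> by (simp add: r_def)
      thus ?thesis using xpos[of j] by (simp add: divide_le_0_iff)
    qed
    hence "\<forall>j\<in>A. - (y j * vs j) \<ge> 0" using ypos' by (simp add: mult_nonneg_nonpos less_imp_le)
    moreover have "(\<Sum>j\<in>A. - (y j * vs j)) = 0" using vs_y sumAU[of "\<lambda>j. y j * vs j"] y0 by (simp add: sum_negf)
    ultimately have "\<forall>j\<in>A. - (y j * vs j) = 0" using sum_nonneg_eq_0_iff[OF finite, of A "\<lambda>j. - (y j * vs j)"] by blast
    hence "vs j = 0" if "j \<in> A" for j using that ypos'[OF that] by auto
    hence "N vs = 0" unfolding N_def by simp
    thus False using vs_N by simp
  qed
  have slack: "y i0 * M - hv H vs i0 = (\<Sum>j\<in>UNIV. H i0 j * x j * (M - r j))"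
  proof -
    have "(\<Sum>j\<in>UNIV. H i0 j * x j * (M - r j)) = (\<Sum>j\<in>UNIV. M * (H i0 j * x j) - H i0 j * vs j)"
      apply (intro sum.cong refl)
      subgoal for j using xpos[of j] by (simp add: r_def field_simps)
      done
    also have "\<dots> = y i0 * M - hv H vs i0"
      by (simp add: sum_subtractf sum_distrib_left y_def hv_def mult.commute)
    finally show ?thesis by simp
  qed
  have terms: "H i0 j * x j * (M - r j) \<ge> 0" for j
  proof (cases "j \<in> A")
    case False thus ?thesis by (simp add: zero2)
  next
    case True
    show ?thesis
    proof (cases "j = i0")
      case True thus ?thesis using i0 by simp
    next
      case False thus ?thesis using pos[OF i0(1) \<open>j \<in> A\<close>] xpos[of j] Mge[OF \<open>j \<in> A\<close>] by simp
    qed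
  qed
  have "hv H vs i0 = lam * y i0 * (vs i0 / x i0)" using eig[OF i0(1)] by simp
  moreover have "vs i0 / x i0 = M" using i0(2) by (simp add: r_def)
  ultimately have "hv H vs i0 = lam * y i0 * M" by (simp only:)
  moreover have "(lam - 1) * (y i0 * M) \<ge> 0" using lam1 ypos'[OF i0(1)] Mpos by simp
  ultimately have "y i0 * M - hv H vs i0 \<le> 0" by (simp add: algebra_simps)
  hence "(\<Sum>j\<in>UNIV. H i0 j * x j * (M - r j)) = 0" using slack terms sum_nonneg[of UNIV "\<lambda>j. H i0 j * x j * (M - r j)"] by auto
  hence allz: "\<forall>j\<in>UNIV. H i0 j * x j * (M - r j) = 0" using terms by (subst (asm) sum_nonneg_eq_0_iff) auto
  have rM: "vs j = M * x j" if "j \<in> A" for j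
  proof -
    have "r j = M"
    proof (cases "j = i0")
      case True thus ?thesis using i0 by simp
    next
      case False
      have "H i0 j * x j * (M - r j) = 0" using allz by simp
      moreover have "H i0 j * x j \<noteq> 0" using pos[OF i0(1) that False[symmetric]] xpos[of j] by simp
      ultimately show ?thesis by simp
    qed
    thus ?thesis using xpos[of j] by (simp add: r_def field_simps)
  qed
  have "(\<Sum>j\<in>A. y j * vs j) > 0"
    using Ane rM ypos' xpos Mpos by (intro sum_pos) auto
  moreover have "(\<Sum>j\<in>A. y j * vs j) = 0" using vs_y sumAU[of "\<lambda>j. y j * vs j"] y0 by simp
  ultimately show False by simp
qed

lemma matrix_lemma:
  fixes H :: "'m::finite \<Rightarrow> 'm \<Rightarrow> real" and x :: "'m \<Rightarrow> real" and A :: "'m set"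
  assumes sym: "\<And>i j. H i j = H j i"
    and zero: "\<And>i j. i \<notin> A \<Longrightarrow> H i j = 0"
    and pos: "\<And>i j. i \<in> A \<Longrightarrow> j \<in> A \<Longrightarrow> i \<noteq> j \<Longrightarrow> 0 < H i j"
    and xpos: "\<And>i. 0 < x i"
    and ypos: "\<And>i. i \<in> A \<Longrightarrow> 0 < hv H x i"
    and hash: "\<And>v. bil H v v \<le> (\<Sum>i\<in>A. x i * (hv H v i)^2 / hv H x i)"
  shows "bil H v v * bil H x x \<le> (bil H x v)^2"
proof -
  have hv0: "hv H x i = 0" if "i \<notin> A" for i using zero[OF that] by (simp add: hv_def)
  have "bil H x x = (\<Sum>i\<in>UNIV. x i * hv H x i)" by (rule bil_hv)
  also have "\<dots> \<ge> 0"
    apply (intro sum_nonneg)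
    subgoal for i using xpos[of i] ypos[of i] hv0[of i] by (cases "i \<in> A") auto
    done
  finally have Qnn: "bil H x x \<ge> 0" .
  show ?thesis
  proof (cases "bil H x x = 0")
    case True thus ?thesis by simp
  next
    case False
    hence Qp: "bil H x x > 0" using Qnn by simp
    define t where "t = bil H x v / bil H x x"
    define w where "w = (\<lambda>i. v i + (- t) * x i)"
    have "(\<Sum>i\<in>UNIV. hv H x i * w i) = (\<Sum>i\<in>UNIV. v i * hv H x i) - t * (\<Sum>i\<in>UNIV. x i * hv H x i)"
      unfolding w_def by (simp add: algebra_simps sum.distrib sum_subtractf sum_distrib_left)
    also have "(\<Sum>i\<in>UNIV. v i * hv H x i) = bil H x v" using bil_hv[of H v x] bil_sym[OF sym, where a=v and b=x] by simp
    also have "(\<Sum>i\<in>UNIV. x i * hv H x i) = bil H x x" by (simp add: bil_hv)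
    finally have "(\<Sum>i\<in>UNIV. hv H x i * w i) = 0" using Qp unfolding t_def by simp
    hence "bil H w w \<le> 0" using core_lemma[OF sym zero pos xpos ypos hash] by blast
    moreover have "bil H w w = bil H v v - 2 * t * bil H x v + t^2 * bil H x x"
      unfolding w_def bil_expand using bil_sym[OF sym, where a=v and b=x] by (simp add: algebra_simps)
    ultimately have "bil H v v - 2 * t * bil H x v + t^2 * bil H x x \<le> 0" by simp
    thus ?thesis by (rule discr[OF Qp])
  qed
qed

definition bx :: "('m \<Rightarrow> nat) \<Rightarrow> ('m \<Rightarrow> nat) set" where "bx u = {\<alpha>. \<forall>j. \<alpha> j \<le> u j}"
definition mnm :: "('m::finite \<Rightarrow> nat) \<Rightarrow> ('m \<Rightarrow> real) \<Rightarrow> real" where "mnm \<alpha> x = (\<Prod>j\<in>UNIV. x j ^ \<alpha> j)"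
definition bsupp :: "('m \<Rightarrow> nat) \<Rightarrow> 'm mpoly_coeffs \<Rightarrow> bool" where
  "bsupp u p \<longleftrightarrow> (\<forall>\<alpha>. p \<alpha> \<noteq> 0 \<longrightarrow> (\<forall>j. \<alpha> j \<le> u j))"
definition homog :: "nat \<Rightarrow> 'm::finite mpoly_coeffs \<Rightarrow> bool" where
  "homog d p \<longleftrightarrow> (\<forall>\<alpha>. p \<alpha> \<noteq> 0 \<longrightarrow> sum \<alpha> UNIV = d)"

lemma finite_bx: "finite (bx (u::'m::finite \<Rightarrow> nat))"
proof -
  have "bx u \<subseteq> PiE UNIV (\<lambda>j. {..u j})" by (auto simp: bx_def PiE_def extensional_def)
  moreover have "finite (PiE (UNIV::'m set) (\<lambda>j. {..u j}))" by (intro finite_PiE) auto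
  ultimately show ?thesis by (rule finite_subset)
qed

lemma eval_bx:
  assumes "bsupp u p"
  shows "mpoly_eval p x = (\<Sum>\<alpha>\<in>bx u. p \<alpha> * mnm \<alpha> x)"
  unfolding mpoly_eval_def mnm_def
  by (rule sum.mono_neutral_left) (use assms finite_bx[of u, unfolded bx_def] in \<open>auto simp: bsupp_def bx_def\<close>)

lemma upd_eq: "\<alpha>(i := Suc (\<alpha> i)) = (\<lambda>j. \<alpha> j + (if j = i then 1 else 0))"
  by (rule ext) auto

lemma upd_sum: "sum (\<alpha>(i := Suc (\<alpha> i))) (UNIV::'m::finite set) = Suc (sum \<alpha> UNIV)"
  unfolding upd_eq by (simp add: sum.distrib)

lemma upd_mnm: "mnm (\<alpha>(i := Suc (\<alpha> i))) x = x i * mnm \<alpha> (x::'m::finite \<Rightarrow> real)"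
proof -
  have "mnm (\<alpha>(i := Suc (\<alpha> i))) x = (\<Prod>j\<in>UNIV. x j ^ \<alpha> j * (if j = i then x j else 1))"
    unfolding mnm_def upd_eq by (intro prod.cong refl) (simp add: power_add)
  also have "\<dots> = mnm \<alpha> x * x i" unfolding mnm_def prod.distrib by (simp add: prod.delta)
  finally show ?thesis by simp
qed

lemma bsupp_pdiff: "bsupp u p \<Longrightarrow> bsupp u (pdiff i p)"
  unfolding bsupp_def pdiff_def
  by (metis (no_types, lifting) fun_upd_apply le_add1 le_trans mult_zero_right order_refl)

lemma homog_pdiff: assumes "homog d p" shows "homog (d - 1) (pdiff i (p::'m::finite mpoly_coeffs))"
  unfolding homog_def
proof (intro allI impI)
  fix \<alpha> :: "'m \<Rightarrow> nat" assume "pdiff i p \<alpha> \<noteq> 0"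
  hence "p (\<alpha>(i := Suc (\<alpha> i))) \<noteq> 0" by (simp add: pdiff_def)
  hence "sum (\<alpha>(i := Suc (\<alpha> i))) UNIV = d" using assms unfolding homog_def by blast
  thus "sum \<alpha> UNIV = d - 1" unfolding upd_sum by simp
qed

lemma homog0_pdiff: assumes "homog 0 p" shows "pdiff i (p::'m::finite mpoly_coeffs) = (\<lambda>_. 0)"
proof
  fix \<alpha> :: "'m \<Rightarrow> nat"
  have "p (\<alpha>(i := Suc (\<alpha> i))) = 0"
  proof (rule ccontr)
    assume "p (\<alpha>(i := Suc (\<alpha> i))) \<noteq> 0"
    hence "sum (\<alpha>(i := Suc (\<alpha> i))) UNIV = 0" using assms unfolding homog_def by blast
    thus False unfolding upd_sum by simp
  qed
  thus "pdiff i p \<alpha> = 0" by (simp add: pdiff_def)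
qed

lemma pdiff_commute: "pdiff i (pdiff j p) = pdiff j (pdiff i p)"
  unfolding pdiff_def by (rule ext) (cases "i = j", auto simp: fun_upd_twist)

lemma eval_zero[simp]: "mpoly_eval (\<lambda>_. 0) x = 0" by (simp add: mpoly_eval_def)
lemma pdiff_zero[simp]: "pdiff i (\<lambda>_. 0) = (\<lambda>_. 0)" by (simp add: pdiff_def)

lemma euler:
  fixes p :: "'m::finite mpoly_coeffs"
  assumes bs: "bsupp u p" and hg: "homog d p"
  shows "(\<Sum>i\<in>UNIV. x i * mpoly_eval (pdiff i p) x) = real d * mpoly_eval p x"
proof -
  have step: "x i * mpoly_eval (pdiff i p) x = (\<Sum>\<alpha>\<in>bx u. real (\<alpha> i) * p \<alpha> * mnm \<alpha> x)" for i
  proof -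
    define \<sigma> where "\<sigma> = (\<lambda>\<alpha>::'m \<Rightarrow> nat. \<alpha>(i := \<alpha> i + 1))"
    define g where "g = (\<lambda>\<beta>. real (\<beta> i) * p \<beta> * mnm \<beta> x)"
    have inj: "inj_on \<sigma> (bx u)" unfolding \<sigma>_def inj_on_def
    proof (intro ballI impI ext)
      fix a b :: "'m \<Rightarrow> nat" and j assume "a(i := a i + 1) = b(i := b i + 1)"
      hence "(a(i := a i + 1)) j = (b(i := b i + 1)) j" by simp
      thus "a j = b j" by (cases "j = i") auto
    qed
    have "x i * mpoly_eval (pdiff i p) x = (\<Sum>\<alpha>\<in>bx u. g (\<sigma> \<alpha>))"
      unfolding eval_bx[OF bsupp_pdiff[OF bs]] sum_distrib_left
      by (intro sum.cong refl) (simp add: g_def \<sigma>_def pdiff_def upd_mnm)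
    also have "\<dots> = (\<Sum>\<beta>\<in>\<sigma> ` bx u. g \<beta>)" by (simp add: sum.reindex[OF inj] comp_def)
    also have "\<dots> = (\<Sum>\<beta>\<in>bx u \<union> \<sigma> ` bx u. g \<beta>)"
    proof (rule sum.mono_neutral_left)
      show "finite (bx u \<union> \<sigma> ` bx u)" using finite_bx by auto
      show "\<forall>\<beta>\<in>bx u \<union> \<sigma> ` bx u - \<sigma> ` bx u. g \<beta> = 0"
      proof
        fix \<beta> assume b: "\<beta> \<in> bx u \<union> \<sigma> ` bx u - \<sigma> ` bx u"
        show "g \<beta> = 0"
        proof (cases "\<beta> i = 0")
          case True thus ?thesis by (simp add: g_def)
        next
          case False
          define \<gamma> where "\<gamma> = \<beta>(i := \<beta> i - 1)"
          have "\<sigma> \<gamma> = \<beta>" using False unfolding \<sigma>_def \<gamma>_def by (auto simp: fun_eq_iff)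
          moreover have "\<gamma> \<in> bx u" using b unfolding \<gamma>_def bx_def by (auto simp: le_diff_conv2) (metis le_trans diff_le_self fun_upd_apply)
          ultimately show ?thesis using b by blast
        qed
      qed
    qed auto
    also have "\<dots> = (\<Sum>\<beta>\<in>bx u. g \<beta>)"
    proof (rule sum.mono_neutral_right)
      show "finite (bx u \<union> \<sigma> ` bx u)" using finite_bx by auto
      show "\<forall>\<beta>\<in>bx u \<union> \<sigma> ` bx u - bx u. g \<beta> = 0"
        using bs unfolding bsupp_def bx_def g_def by auto
    qed auto
    finally show ?thesis unfolding g_def .
  qed
  have "(\<Sum>i\<in>UNIV. x i * mpoly_eval (pdiff i p) x) = (\<Sum>\<alpha>\<in>bx u. (\<Sum>i\<in>UNIV. real (\<alpha> i)) * (p \<alpha> * mnm \<alpha> x))"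
    unfolding step by (subst sum.swap) (simp add: sum_distrib_right mult.assoc)
  also have "\<dots> = (\<Sum>\<alpha>\<in>bx u. real d * (p \<alpha> * mnm \<alpha> x))"
  proof (intro sum.cong refl)
    fix \<alpha> show "(\<Sum>i\<in>UNIV. real (\<alpha> i)) * (p \<alpha> * mnm \<alpha> x) = real d * (p \<alpha> * mnm \<alpha> x)"
      using hg unfolding homog_def by (cases "p \<alpha> = 0") (auto simp flip: of_nat_sum)
  qed
  also have "\<dots> = real d * mpoly_eval p x" by (simp add: eval_bx[OF bs] sum_distrib_left mult.assoc)
  finally show ?thesis .
qed

definition cp :: "real \<Rightarrow> nat \<Rightarrow> ('m::finite \<Rightarrow> nat) \<Rightarrow> ('m \<Rightarrow> nat \<Rightarrow> real) \<Rightarrow> 'm mpoly_coeffs" where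
  "cp C d u w = (\<lambda>\<alpha>. if (\<forall>e. \<alpha> e \<le> u e) \<and> sum \<alpha> UNIV = d then C * (\<Prod>e\<in>UNIV. w e (\<alpha> e) / fact (\<alpha> e)) else 0)"

definition valid :: "real \<Rightarrow> ('m \<Rightarrow> nat \<Rightarrow> real) \<Rightarrow> bool" where
  "valid C w \<longleftrightarrow> C > 0 \<and> (\<forall>e j. 0 < w e j) \<and> (\<forall>e j. w e j * w e (j+2) \<le> (w e (j+1))^2)"

definition shiftw :: "'m \<Rightarrow> ('m \<Rightarrow> nat \<Rightarrow> real) \<Rightarrow> ('m \<Rightarrow> nat \<Rightarrow> real)" where
  "shiftw i w = w(i := (\<lambda>j. w i (Suc j)))"

lemma bsupp_cp: "bsupp u (cp C d u w)" by (simp add: bsupp_def cp_def)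
lemma homog_cp: "homog d (cp C d u w)" by (simp add: homog_def cp_def)

lemma valid_shift: "valid C w \<Longrightarrow> valid C (shiftw i w)"
  unfolding valid_def shiftw_def
  by (auto simp: numeral_2_eq_2)

lemma cp_val_pos: "valid C w \<Longrightarrow> 0 < C * (\<Prod>e\<in>UNIV. w e (\<alpha> e) / fact (\<alpha> e))"
  unfolding valid_def by (auto intro!: mult_pos_pos prod_pos divide_pos_pos)

lemma cp_nonneg: "valid C w \<Longrightarrow> cp C d u w \<alpha> \<ge> 0"
  unfolding cp_def using cp_val_pos[of C w \<alpha>] by auto

lemma prod_split: "(\<Prod>e\<in>(UNIV::'m::finite set). f e) = f i * (\<Prod>e\<in>UNIV - {i}. f e)"
  by (rule prod.remove) auto

lemma pdiff_cp:
  fixes u :: "'m::finite \<Rightarrow> nat"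
  assumes "1 \<le> u i" "1 \<le> d"
  shows "pdiff i (cp C d u w) = cp C (d - 1) (u(i := u i - 1)) (shiftw i w)"
proof
  fix \<alpha> :: "'m \<Rightarrow> nat"
  define \<alpha>' where "\<alpha>' = \<alpha>(i := Suc (\<alpha> i))"
  have c1: "(\<forall>e. \<alpha>' e \<le> u e) \<longleftrightarrow> (\<forall>e. \<alpha> e \<le> (u(i := u i - 1)) e)"
    unfolding \<alpha>'_def using assms(1) by (auto simp: fun_upd_apply)
  have c2: "sum \<alpha>' UNIV = d \<longleftrightarrow> sum \<alpha> UNIV = d - 1" unfolding \<alpha>'_def upd_sum using assms(2) by auto
  have val: "real (\<alpha> i + 1) * (C * (\<Prod>e\<in>UNIV. w e (\<alpha>' e) / fact (\<alpha>' e))) =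
      C * (\<Prod>e\<in>UNIV. shiftw i w e (\<alpha> e) / fact (\<alpha> e))"
  proof -
    have r: "(\<Prod>e\<in>UNIV - {i}. w e (\<alpha>' e) / fact (\<alpha>' e)) = (\<Prod>e\<in>UNIV - {i}. shiftw i w e (\<alpha> e) / fact (\<alpha> e))"
      by (intro prod.cong refl) (auto simp: \<alpha>'_def shiftw_def)
    have ne: "real (\<alpha> i) + 1 \<noteq> 0" "(fact (\<alpha> i)::real) \<noteq> 0" by (simp add: add_nonneg_pos) simp
    have "real (\<alpha> i + 1) * (w i (\<alpha>' i) / fact (\<alpha>' i)) = (real (\<alpha> i) + 1) * (w i (Suc (\<alpha> i)) / ((real (\<alpha> i) + 1) * fact (\<alpha> i)))"
      by (simp add: \<alpha>'_def)
    also have "\<dots> = shiftw i w i (\<alpha> i) / fact (\<alpha> i)" using ne by (simp add: shiftw_def)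
    finally have "real (\<alpha> i + 1) * (w i (\<alpha>' i) / fact (\<alpha>' i)) = shiftw i w i (\<alpha> i) / fact (\<alpha> i)" .
    note eqi = this
    have P1: "(\<Prod>e\<in>UNIV. w e (\<alpha>' e) / fact (\<alpha>' e)) = (w i (\<alpha>' i) / fact (\<alpha>' i)) * (\<Prod>e\<in>UNIV - {i}. w e (\<alpha>' e) / fact (\<alpha>' e))"
      by (rule prod_split)
    have P2: "(\<Prod>e\<in>UNIV. shiftw i w e (\<alpha> e) / fact (\<alpha> e)) = (shiftw i w i (\<alpha> i) / fact (\<alpha> i)) * (\<Prod>e\<in>UNIV - {i}. shiftw i w e (\<alpha> e) / fact (\<alpha> e))"
      by (rule prod_split)
    have "real (\<alpha> i + 1) * (C * (\<Prod>e\<in>UNIV. w e (\<alpha>' e) / fact (\<alpha>' e))) =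
        C * ((real (\<alpha> i + 1) * (w i (\<alpha>' i) / fact (\<alpha>' i))) * (\<Prod>e\<in>UNIV - {i}. shiftw i w e (\<alpha> e) / fact (\<alpha> e)))"
      unfolding P1 r by (simp only: mult_ac)
    also have "\<dots> = C * (\<Prod>e\<in>UNIV. shiftw i w e (\<alpha> e) / fact (\<alpha> e))" unfolding P2 eqi ..
    finally show ?thesis .
  qed
  show "pdiff i (cp C d u w) \<alpha> = cp C (d - 1) (u(i := u i - 1)) (shiftw i w) \<alpha>"
    unfolding pdiff_def cp_def using c1 c2 val unfolding \<alpha>'_def by (simp only: Suc_eq_plus1) auto
qed

lemma pdiff_cp0:
  fixes u :: "'m::finite \<Rightarrow> nat"
  assumes "u i = 0" shows "pdiff i (cp C d u w) = (\<lambda>_. 0)"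
  unfolding pdiff_def cp_def using assms by (auto intro!: ext)

lemma sum_decr:
  fixes u :: "'m::finite \<Rightarrow> nat"
  assumes "1 \<le> u i" shows "sum (u(i := u i - 1)) UNIV = sum u UNIV - 1"
proof -
  have "(u(i := u i - 1))(i := Suc ((u(i := u i - 1)) i)) = u" using assms by (auto simp: fun_eq_iff)
  hence "Suc (sum (u(i := u i - 1)) UNIV) = sum u UNIV" using upd_sum[of "u(i := u i - 1)" i] by simp
  thus ?thesis by simp
qed

lemma exists_alpha:
  fixes u :: "'m::finite \<Rightarrow> nat"
  shows "d \<le> sum u UNIV \<Longrightarrow> \<exists>\<alpha>. (\<forall>j. \<alpha> j \<le> u j) \<and> sum \<alpha> UNIV = d"
proof (induction d)
  case 0 thus ?case by (intro exI[of _ "\<lambda>_. 0"]) auto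
next
  case (Suc d)
  then obtain \<alpha> where a: "\<forall>j. \<alpha> j \<le> u j" "sum \<alpha> UNIV = d" by auto
  have "\<exists>j. \<alpha> j < u j"
  proof (rule ccontr)
    assume "\<not> (\<exists>j. \<alpha> j < u j)"
    hence "\<alpha> = u" using a(1) by (auto simp: fun_eq_iff intro: antisym) (meson le_antisym not_less)
    thus False using a(2) Suc.prems by simp
  qed
  then obtain j where j: "\<alpha> j < u j" by auto
  show ?case
  proof (intro exI conjI)
    show "\<forall>k. (\<alpha>(j := Suc (\<alpha> j))) k \<le> u k" using a(1) j by auto
    show "sum (\<alpha>(j := Suc (\<alpha> j))) UNIV = Suc d" by (simp only: upd_sum a(2))
  qed
qed

lemma cp_zero:
  fixes u :: "'m::finite \<Rightarrow> nat"
  assumes "sum u UNIV < d" shows "cp C d u w = (\<lambda>_. 0)"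
proof
  fix \<alpha> :: "'m \<Rightarrow> nat"
  have "\<not> ((\<forall>e. \<alpha> e \<le> u e) \<and> sum \<alpha> UNIV = d)"
  proof
    assume h: "(\<forall>e. \<alpha> e \<le> u e) \<and> sum \<alpha> UNIV = d"
    hence "sum \<alpha> UNIV \<le> sum u UNIV" by (intro sum_mono) auto
    thus False using h assms by simp
  qed
  thus "cp C d u w \<alpha> = 0" unfolding cp_def by auto
qed

lemma mnm_pos: "(\<And>j. 0 < x j) \<Longrightarrow> 0 < mnm \<alpha> x" unfolding mnm_def by (auto intro!: prod_pos)

lemma eval_cp_pos:
  fixes u :: "'m::finite \<Rightarrow> nat"
  assumes v: "valid C w" and d: "d \<le> sum u UNIV" and x: "\<And>j. 0 < x j"
  shows "0 < mpoly_eval (cp C d u w) x"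
proof -
  obtain \<alpha> where a: "\<forall>j. \<alpha> j \<le> u j" "sum \<alpha> UNIV = d" using exists_alpha[OF d] by auto
  have mp: "0 < mnm \<beta> x" for \<beta> by (rule mnm_pos) (rule x)
  have "0 < (\<Sum>\<beta>\<in>bx u. cp C d u w \<beta> * mnm \<beta> x)"
  proof (rule sum_pos2[of _ \<alpha>])
    show "finite (bx u)" by (rule finite_bx)
    show "\<alpha> \<in> bx u" using a by (simp add: bx_def)
    show "0 < cp C d u w \<alpha> * mnm \<alpha> x" using a cp_val_pos[OF v, of \<alpha>] mp[of \<alpha>] by (simp add: cp_def)
    show "\<And>i. i \<in> bx u \<Longrightarrow> 0 \<le> cp C d u w i * mnm i x" using cp_nonneg[OF v] mp by (simp add: less_imp_le)
  qed
  thus ?thesis by (simp add: eval_bx[OF bsupp_cp])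
qed

lemma eval_cp_nonneg:
  assumes v: "valid C w" and x: "\<And>j. 0 < x j"
  shows "0 \<le> mpoly_eval (cp C d u w) x"
proof -
  have mp: "0 < mnm \<beta> x" for \<beta> by (rule mnm_pos) (rule x)
  show ?thesis unfolding eval_bx[OF bsupp_cp]
    using cp_nonneg[OF v] mp by (intro sum_nonneg) (simp add: less_imp_le)
qed

lemma eval_cp0: "mpoly_eval (cp C 0 u w) x = C * (\<Prod>e\<in>UNIV. w e 0)"
proof -
  have bs: "bsupp (\<lambda>_. 0) (cp C 0 u w)" by (auto simp: bsupp_def cp_def)
  have "bx (\<lambda>_::'a. 0::nat) = {\<lambda>_. 0}" by (auto simp: bx_def)
  thus ?thesis unfolding eval_bx[OF bs] by (simp add: cp_def mnm_def)
qed

definition Hm :: "'m::finite mpoly_coeffs \<Rightarrow> ('m \<Rightarrow> real) \<Rightarrow> 'm \<Rightarrow> 'm \<Rightarrow> real" where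
  "Hm p x i j = mpoly_eval (pdiff i (pdiff j p)) x"

definition RCS :: "'m::finite mpoly_coeffs \<Rightarrow> ('m \<Rightarrow> real) \<Rightarrow> bool" where
  "RCS p x \<longleftrightarrow> (\<forall>v. bil (Hm p x) v v * bil (Hm p x) x x \<le> (bil (Hm p x) x v)^2)"

lemma Hm_sym: "Hm p x i j = Hm p x j i" by (simp add: Hm_def pdiff_commute)

lemma bil_x_left:
  assumes "bsupp u q" "homog e q"
  shows "bil (Hm q x) x v = real (e - 1) * (\<Sum>k\<in>UNIV. mpoly_eval (pdiff k q) x * v k)"
proof -
  have "bil (Hm q x) x v = (\<Sum>k\<in>UNIV. v k * (\<Sum>j\<in>UNIV. x j * mpoly_eval (pdiff j (pdiff k q)) x))"
    unfolding bil_def Hm_def by (subst sum.swap) (simp add: sum_distrib_left algebra_simps)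
  also have "\<dots> = (\<Sum>k\<in>UNIV. v k * (real (e - 1) * mpoly_eval (pdiff k q) x))"
    by (intro sum.cong refl) (simp add: euler[OF bsupp_pdiff[OF assms(1)] homog_pdiff[OF assms(2)]])
  finally show ?thesis by (simp add: sum_distrib_left algebra_simps)
qed

lemma hv_x:
  assumes "bsupp u q" "homog e q"
  shows "hv (Hm q x) x i = real (e - 1) * mpoly_eval (pdiff i q) x"
proof -
  have "hv (Hm q x) x i = (\<Sum>k\<in>UNIV. x k * mpoly_eval (pdiff k (pdiff i q)) x)"
    unfolding hv_def Hm_def by (intro sum.cong refl) (simp add: pdiff_commute mult.commute)
  thus ?thesis by (simp add: euler[OF bsupp_pdiff[OF assms(1)] homog_pdiff[OF assms(2)]])
qed

lemma bil_xx:
  assumes "bsupp u q" "homog e q"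
  shows "bil (Hm q x) x x = real (e - 1) * real e * mpoly_eval q x"
proof -
  have "bil (Hm q x) x x = real (e - 1) * (\<Sum>k\<in>UNIV. x k * mpoly_eval (pdiff k q) x)"
    unfolding bil_x_left[OF assms] by (simp add: mult.commute)
  thus ?thesis by (simp add: euler[OF assms])
qed

lemma lc_from_rcs:
  fixes p :: "'m::finite mpoly_coeffs"
  assumes bs: "bsupp u p" and hg: "homog D p" and P: "mpoly_eval p x > 0" and r: "2 \<le> D \<Longrightarrow> RCS p x"
  shows "neg_semidef (hess_log p x)"
  unfolding neg_semidef_def
proof
  fix v :: "'m \<Rightarrow> real"
  define PP where "PP = mpoly_eval p x"
  define g where "g = (\<lambda>i. mpoly_eval (pdiff i p) x)"
  define s where "s = (\<Sum>i\<in>UNIV. g i * v i)"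
  define Q where "Q = bil (Hm p x) v v"
  have iden: "(\<Sum>i\<in>UNIV. \<Sum>j\<in>UNIV. v i * hess_log p x i j * v j) = (PP * Q - s^2) / PP^2"
  proof -
    have "(\<Sum>i\<in>UNIV. \<Sum>j\<in>UNIV. v i * hess_log p x i j * v j) =
        (\<Sum>i\<in>UNIV. \<Sum>j\<in>UNIV. (PP * (v i * Hm p x i j * v j) - (g i * v i) * (g j * v j)) / PP^2)"
      unfolding hess_log_def PP_def g_def Hm_def by (intro sum.cong refl) (simp add: field_simps)
    also have "\<dots> = (PP * Q - s^2) / PP^2"
      unfolding Q_def s_def bil_def
      by (simp add: sum_divide_distrib[symmetric] sum_subtractf sum_distrib_left[symmetric] sum_product power2_eq_square)
    finally show ?thesis .
  qed
  have key: "PP * Q \<le> s^2"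
  proof (cases "2 \<le> D")
    case False
    hence "D - 1 = 0" by simp
    hence "homog 0 (pdiff j p)" for j using homog_pdiff[OF hg, of j] by simp
    hence "Hm p x i j = 0" for i j unfolding Hm_def using homog0_pdiff[of "pdiff j p" i] by simp
    hence "Q = 0" unfolding Q_def bil_def by simp
    thus ?thesis by simp
  next
    case True
    have R: "Q * bil (Hm p x) x x \<le> (bil (Hm p x) x v)^2" using r[OF True] unfolding RCS_def Q_def by blast
    have xx: "bil (Hm p x) x x = real (D - 1) * real D * PP" unfolding PP_def by (rule bil_xx[OF bs hg])
    have xv: "bil (Hm p x) x v = real (D - 1) * s" unfolding s_def g_def by (rule bil_x_left[OF bs hg])
    have D1: "real (D - 1) > 0" using True by simp
    have "real (D - 1) * (Q * real D * PP) \<le> real (D - 1) * (real (D - 1) * s^2)"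
      using R unfolding xx xv by (simp add: power2_eq_square algebra_simps)
    hence "Q * real D * PP \<le> real (D - 1) * s^2" using D1 by (simp add: mult_le_cancel_left_pos)
    also have "\<dots> \<le> real D * s^2" by (intro mult_right_mono) auto
    finally have "real D * (PP * Q) \<le> real D * s^2" by (simp add: algebra_simps)
    thus ?thesis using True by (simp add: mult_le_cancel_left_pos)
  qed
  show "(\<Sum>i\<in>UNIV. \<Sum>j\<in>UNIV. v i * hess_log p x i j * v j) \<le> 0"
    unfolding iden using key P PP_def by (simp add: divide_nonpos_pos)
qed

lemma bil_r1:
  fixes H :: "'m::finite \<Rightarrow> 'm \<Rightarrow> real"
  assumes H: "\<And>i j. H i j = \<kappa> * (\<sigma> i * \<sigma> j - (if i = j then \<Lambda> i else 0))"
  shows "bil H a b = \<kappa> * ((\<Sum>i\<in>UNIV. \<sigma> i * a i) * (\<Sum>j\<in>UNIV. \<sigma> j * b j) - (\<Sum>i\<in>UNIV. \<Lambda> i * a i * b i))"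
proof -
  have t: "a i * H i j * b j = \<kappa> * (\<sigma> i * a i) * (\<sigma> j * b j) - (if j = i then \<kappa> * (\<Lambda> i * a i * b i) else 0)" for i j
    by (auto simp: H algebra_simps)
  define Sb where "Sb = (\<Sum>j\<in>UNIV. \<sigma> j * b j)"
  have "bil H a b = (\<Sum>i\<in>UNIV. \<kappa> * (\<sigma> i * a i) * Sb - \<kappa> * (\<Lambda> i * a i * b i))"
    unfolding bil_def t Sb_def by (simp add: sum_subtractf sum_distrib_left)
  also have "\<dots> = \<kappa> * (\<Sum>i\<in>UNIV. \<sigma> i * a i) * Sb - \<kappa> * (\<Sum>i\<in>UNIV. \<Lambda> i * a i * b i)"
    by (simp add: sum_subtractf sum_distrib_left sum_distrib_right mult.assoc)
  also have "\<dots> = \<kappa> * ((\<Sum>i\<in>UNIV. \<sigma> i * a i) * (\<Sum>j\<in>UNIV. \<sigma> j * b j) - (\<Sum>i\<in>UNIV. \<Lambda> i * a i * b i))"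
    unfolding Sb_def by (simp add: algebra_simps)
  finally show ?thesis .
qed

lemma rcs_r1:
  fixes H :: "'m::finite \<Rightarrow> 'm \<Rightarrow> real"
  assumes H: "\<And>i j. H i j = \<kappa> * (\<sigma> i * \<sigma> j - (if i = j then \<Lambda> i else 0))"
    and k: "\<kappa> > 0" and L: "\<And>i. \<Lambda> i \<ge> 0" and xx: "bil H x x > 0"
  shows "bil H v v * bil H x x \<le> (bil H x v)^2"
proof -
  define a where "a = (\<Sum>i\<in>UNIV. \<sigma> i * x i)"
  define b where "b = (\<Sum>i\<in>UNIV. \<sigma> i * v i)"
  have Lnn: "(\<Sum>i\<in>UNIV. \<Lambda> i * y i * y i) \<ge> 0" for y
    by (intro sum_nonneg) (metis L mult.assoc mult_nonneg_nonneg zero_le_square)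
  have "a \<noteq> 0"
  proof
    assume "a = 0"
    hence "bil H x x = \<kappa> * (0 - (\<Sum>i\<in>UNIV. \<Lambda> i * x i * x i))" unfolding bil_r1[OF H] a_def by simp
    also have "\<dots> \<le> 0" using k Lnn[of x] by (simp add: mult_nonneg_nonneg)
    finally show False using xx by simp
  qed
  define t where "t = b / a"
  define w where "w = (\<lambda>i. v i + (- t) * x i)"
  have "(\<Sum>i\<in>UNIV. \<sigma> i * w i) = b - t * a" unfolding w_def a_def b_def
    by (simp add: algebra_simps sum.distrib sum_subtractf sum_distrib_left)
  also have "\<dots> = 0" unfolding t_def using \<open>a \<noteq> 0\<close> by simp
  finally have sw: "(\<Sum>i\<in>UNIV. \<sigma> i * w i) = 0" .
  have "bil H w w = \<kappa> * (0 - (\<Sum>i\<in>UNIV. \<Lambda> i * w i * w i))" unfolding bil_r1[OF H] sw by simp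
  also have "\<dots> \<le> 0" using k Lnn[of w] by (simp add: mult_nonneg_nonneg)
  finally have "bil H w w \<le> 0" .
  moreover have sym: "H i j = H j i" for i j by (simp add: H mult.commute)
  moreover have "bil H w w = bil H v v - 2 * t * bil H x v + t^2 * bil H x x"
    unfolding w_def bil_expand using bil_sym[OF sym, where a=v and b=x] by (simp add: algebra_simps)
  ultimately have "bil H v v - 2 * t * bil H x v + t^2 * bil H x x \<le> 0" by simp
  thus ?thesis by (rule discr[OF xx])
qed

lemma prod_ratio:
  fixes f g :: "'m::finite \<Rightarrow> real"
  assumes "\<And>e. e \<notin> S \<Longrightarrow> f e = g e" "\<And>e. g e \<noteq> 0"
  shows "(\<Prod>e\<in>UNIV. f e) = (\<Prod>e\<in>UNIV. g e) * (\<Prod>e\<in>S. f e / g e)"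
proof -
  have "(\<Prod>e\<in>UNIV. f e) = (\<Prod>e\<in>UNIV. g e * (if e \<in> S then f e / g e else 1))"
    by (intro prod.cong refl) (use assms in auto)
  also have "\<dots> = (\<Prod>e\<in>UNIV. g e) * (\<Prod>e\<in>UNIV. (if e \<in> S then f e / g e else 1))" by (rule prod.distrib)
  also have "(\<Prod>e\<in>UNIV. (if e \<in> S then f e / g e else 1)) = (\<Prod>e\<in>UNIV \<inter> S. f e / g e)"
    by (rule prod.inter_restrict[symmetric]) simp
  finally show ?thesis by simp
qed

lemma Hm_cp2:
  fixes u :: "'m::finite \<Rightarrow> nat"
  assumes v: "valid C w"
  defines "\<kappa> \<equiv> C * (\<Prod>e\<in>UNIV. w e 0)"
    and "\<sigma> \<equiv> (\<lambda>i. if 1 \<le> u i then w i 1 / w i 0 else 0)"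
    and "\<Lambda> \<equiv> (\<lambda>i. (if 1 \<le> u i then w i 1 / w i 0 else 0)^2 - (if 2 \<le> u i then w i 2 / w i 0 else 0))"
  shows "Hm (cp C 2 u w) x i j = \<kappa> * (\<sigma> i * \<sigma> j - (if i = j then \<Lambda> i else 0))"
proof -
  have wpos: "\<And>e k. 0 < w e k" using v by (simp add: valid_def)
  have wne: "\<And>e k. w e k \<noteq> 0" using wpos by (metis less_irrefl)
  show ?thesis
  proof (cases "u j = 0")
    case True
    hence "Hm (cp C 2 u w) x i j = 0" unfolding Hm_def pdiff_cp0[where u=u and i=j, OF True] by simp
    thus ?thesis using True unfolding \<sigma>_def \<Lambda>_def by auto
  next
    case False
    hence uj: "1 \<le> u j" by simp
    define u1 where "u1 = u(j := u j - 1)"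
    have p1: "pdiff j (cp C 2 u w) = cp C 1 u1 (shiftw j w)" unfolding u1_def using pdiff_cp[where u=u and i=j and d=2 and C=C and w=w] uj by simp
    show ?thesis
    proof (cases "u1 i = 0")
      case True
      hence "Hm (cp C 2 u w) x i j = 0" unfolding Hm_def p1 pdiff_cp0[where u=u1 and i=i, OF True] by simp
      moreover have "\<sigma> i * \<sigma> j - (if i = j then \<Lambda> i else 0) = 0"
      proof (cases "i = j")
        case True
        hence "u j = 1" using \<open>u1 i = 0\<close> uj unfolding u1_def by simp
        thus ?thesis using True unfolding \<Lambda>_def \<sigma>_def by (simp add: power2_eq_square)
      next
        case False
        hence "u i = 0" using \<open>u1 i = 0\<close> unfolding u1_def by simp
        thus ?thesis using False unfolding \<sigma>_def by simp
      qed
      ultimately show ?thesis by simp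
    next
      case False
      hence ui1: "1 \<le> u1 i" by simp
      have p2: "pdiff i (cp C 1 u1 (shiftw j w)) = cp C 0 (u1(i := u1 i - 1)) (shiftw i (shiftw j w))"
        using pdiff_cp[where u=u1 and i=i and d=1 and C=C and w="shiftw j w"] ui1 by simp
      have H: "Hm (cp C 2 u w) x i j = C * (\<Prod>e\<in>UNIV. shiftw i (shiftw j w) e 0)"
        unfolding Hm_def p1 p2 eval_cp0 ..
      show ?thesis
      proof (cases "i = j")
        case True
        have "(\<Prod>e\<in>UNIV. shiftw i (shiftw j w) e 0) = (\<Prod>e\<in>UNIV. w e 0) * (\<Prod>e\<in>{j}. shiftw i (shiftw j w) e 0 / w e 0)"
          by (rule prod_ratio) (auto simp: shiftw_def True wne)
        also have "\<dots> = (\<Prod>e\<in>UNIV. w e 0) * (w j 2 / w j 0)" using True by (simp add: shiftw_def numeral_2_eq_2)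
        finally have "Hm (cp C 2 u w) x i j = \<kappa> * (w j 2 / w j 0)" unfolding H \<kappa>_def by simp
        moreover have "2 \<le> u j" using ui1 True unfolding u1_def by simp
        ultimately show ?thesis using True unfolding \<Lambda>_def \<sigma>_def by (simp add: power2_eq_square)
      next
        case False
        have "(\<Prod>e\<in>UNIV. shiftw i (shiftw j w) e 0) = (\<Prod>e\<in>UNIV. w e 0) * (\<Prod>e\<in>{i, j}. shiftw i (shiftw j w) e 0 / w e 0)"
          by (rule prod_ratio) (auto simp: shiftw_def wne)
        also have "\<dots> = (\<Prod>e\<in>UNIV. w e 0) * ((w i 1 / w i 0) * (w j 1 / w j 0))" using False by (simp add: shiftw_def)
        finally have "Hm (cp C 2 u w) x i j = \<kappa> * ((w i 1 / w i 0) * (w j 1 / w j 0))" unfolding H \<kappa>_def by simp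
        moreover have "1 \<le> u i" using ui1 False unfolding u1_def by simp
        ultimately show ?thesis using False uj unfolding \<sigma>_def by simp
      qed
    qed
  qed
qed

lemma rcs_base:
  fixes u :: "'m::finite \<Rightarrow> nat"
  assumes vl: "valid C w" and d: "2 \<le> sum u UNIV" and x: "\<And>j. 0 < x j"
  shows "RCS (cp C 2 u w) x"
  unfolding RCS_def
proof
  fix v :: "'m \<Rightarrow> real"
  have wpos: "\<And>e k. 0 < w e k" using vl by (simp add: valid_def)
  have lc: "w e 0 * w e 2 \<le> (w e 1)^2" for e using vl unfolding valid_def by (metis add_0)
  define \<kappa> where "\<kappa> = C * (\<Prod>e\<in>UNIV. w e 0)"
  define \<sigma> where "\<sigma> = (\<lambda>i. if 1 \<le> u i then w i 1 / w i 0 else 0)"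
  define \<Lambda> where "\<Lambda> = (\<lambda>i. (if 1 \<le> u i then w i 1 / w i 0 else 0)^2 - (if 2 \<le> u i then w i 2 / w i 0 else 0))"
  have H: "\<And>i j. Hm (cp C 2 u w) x i j = \<kappa> * (\<sigma> i * \<sigma> j - (if i = j then \<Lambda> i else 0))"
    unfolding \<kappa>_def \<sigma>_def \<Lambda>_def by (rule Hm_cp2[OF vl])
  have "0 < (\<Prod>e\<in>UNIV. w e 0)" using wpos by (intro prod_pos) auto
  hence kp: "\<kappa> > 0" unfolding \<kappa>_def using vl by (simp add: valid_def)
  have Lnn: "\<Lambda> i \<ge> 0" for i
  proof (cases "2 \<le> u i")
    case True
    have "w i 2 / w i 0 \<le> (w i 1 / w i 0)^2"
      using lc[of i] wpos[of i 0] by (simp add: power_divide field_simps power2_eq_square)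
    thus ?thesis using True unfolding \<Lambda>_def by simp
  next
    case False thus ?thesis unfolding \<Lambda>_def by simp
  qed
  have xx: "bil (Hm (cp C 2 u w) x) x x > 0"
    unfolding bil_xx[OF bsupp_cp homog_cp] using eval_cp_pos[OF vl d x] by simp
  show "bil (Hm (cp C 2 u w) x) v v * bil (Hm (cp C 2 u w) x) x x \<le> (bil (Hm (cp C 2 u w) x) x v)^2"
    by (rule rcs_r1[OF H kp Lnn xx])
qed

lemma rcs_cp:
  fixes u :: "'m::finite \<Rightarrow> nat"
  assumes "2 \<le> d"
  shows "valid C w \<Longrightarrow> d \<le> sum u UNIV \<Longrightarrow> (\<And>j. 0 < x j) \<Longrightarrow> RCS (cp C d u w) x"
  using assms
proof (induction d arbitrary: C u w rule: nat_induct_at_least)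
  case base
  thus ?case using rcs_base by blast
next
  case (Suc d)
  note vl = Suc.prems(1) and dle = Suc.prems(2) and x = Suc.prems(3)
  define p where "p = cp C (Suc d) u w"
  define H where "H = Hm p x"
  define A where "A = {i. 1 \<le> u i}"
  define q where "q = (\<lambda>i. cp C d (u(i := u i - 1)) (shiftw i w))"
  have pq: "pdiff i p = q i" if "i \<in> A" for i
    using that pdiff_cp[where u=u and i=i and d="Suc d" and C=C and w=w] unfolding p_def q_def A_def by simp
  have p0: "pdiff i p = (\<lambda>_. 0)" if "i \<notin> A" for i
    using that pdiff_cp0[where u=u and i=i] unfolding p_def A_def by simp
  have bsp: "bsupp u p" and hgp: "homog (Suc d) p" unfolding p_def by (rule bsupp_cp, rule homog_cp)
  have vq: "valid C (shiftw i w)" for i by (rule valid_shift[OF vl])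
  have sq: "d \<le> sum (u(i := u i - 1)) UNIV" if "i \<in> A" for i
    using sum_decr[of u i] that dle unfolding A_def by simp
  have qpos: "0 < mpoly_eval (q i) x" if "i \<in> A" for i
    unfolding q_def by (rule eval_cp_pos[OF vq sq[OF that] x])
  have symH: "\<And>i j. H i j = H j i" unfolding H_def by (rule Hm_sym)
  have zeroH: "H i j = 0" if "i \<notin> A" for i j
    unfolding H_def Hm_def pdiff_commute[of i j] p0[OF that] by simp
  have posH: "0 < H i j" if "i \<in> A" "j \<in> A" "i \<noteq> j" for i j
  proof -
    define u1 where "u1 = u(j := u j - 1)"
    have "u1 i = u i" using that(3) unfolding u1_def by simp
    hence ui: "1 \<le> u1 i" using that(1) unfolding A_def by simp
    have d1: "1 \<le> d" using Suc.hyps by simp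
    have e: "pdiff i (q j) = cp C (d - 1) (u1(i := u1 i - 1)) (shiftw i (shiftw j w))"
      unfolding q_def u1_def[symmetric] using pdiff_cp[where u=u1 and i=i and d=d and C=C and w="shiftw j w"] ui d1 by simp
    have "sum u1 UNIV = sum u UNIV - 1" unfolding u1_def by (rule sum_decr) (use that(2) A_def in simp)
    moreover have "sum (u1(i := u1 i - 1)) UNIV = sum u1 UNIV - 1" by (rule sum_decr[where u=u1 and i=i, OF ui])
    ultimately have "d - 1 \<le> sum (u1(i := u1 i - 1)) UNIV" using dle Suc.hyps by simp
    hence "0 < mpoly_eval (pdiff i (q j)) x" unfolding e by (intro eval_cp_pos valid_shift vl x)
    thus ?thesis unfolding H_def Hm_def pq[OF that(2)] .
  qed
  have yval: "hv H x i = real d * mpoly_eval (pdiff i p) x" for i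
    unfolding H_def using hv_x[OF bsp hgp] by simp
  have ypos: "0 < hv H x i" if "i \<in> A" for i
    unfolding yval pq[OF that] using qpos[OF that] Suc.hyps by simp
  define B where "B = (\<lambda>i. Hm (pdiff i p) x)"
  have E3: "(\<Sum>i\<in>UNIV. x i * mpoly_eval (pdiff j (pdiff k (pdiff i p))) x) = real (d - 1) * H j k" for j k
  proof -
    have "pdiff j (pdiff k (pdiff i p)) = pdiff i (pdiff j (pdiff k p))" for i
      by (metis pdiff_commute)
    hence "(\<Sum>i\<in>UNIV. x i * mpoly_eval (pdiff j (pdiff k (pdiff i p))) x) =
        (\<Sum>i\<in>UNIV. x i * mpoly_eval (pdiff i (pdiff j (pdiff k p))) x)" by simp
    also have "\<dots> = real (Suc d - 1 - 1 - 1 + 1) * mpoly_eval (pdiff j (pdiff k p)) x"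
      using euler[OF bsupp_pdiff[OF bsupp_pdiff[OF bsp]] homog_pdiff[OF homog_pdiff[OF hgp]]] Suc.hyps by simp
    finally show ?thesis unfolding H_def Hm_def using Suc.hyps by simp
  qed
  have h3: "(\<Sum>i\<in>UNIV. x i * bil (B i) v v) = real (d - 1) * bil H v v" for v
  proof -
    have "(\<Sum>i\<in>UNIV. x i * bil (B i) v v) =
        (\<Sum>i\<in>UNIV. \<Sum>j\<in>UNIV. \<Sum>k\<in>UNIV. v j * (x i * mpoly_eval (pdiff j (pdiff k (pdiff i p))) x) * v k)"
      unfolding B_def bil_def Hm_def by (simp add: sum_distrib_left mult_ac)
    also have "\<dots> = (\<Sum>j\<in>UNIV. \<Sum>k\<in>UNIV. \<Sum>i\<in>UNIV. v j * (x i * mpoly_eval (pdiff j (pdiff k (pdiff i p))) x) * v k)"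
    proof -
      have "(\<Sum>i\<in>UNIV. \<Sum>j\<in>UNIV. \<Sum>k\<in>UNIV. v j * (x i * mpoly_eval (pdiff j (pdiff k (pdiff i p))) x) * v k) =
        (\<Sum>j\<in>UNIV. \<Sum>i\<in>UNIV. \<Sum>k\<in>UNIV. v j * (x i * mpoly_eval (pdiff j (pdiff k (pdiff i p))) x) * v k)"
        by (rule sum.swap)
      also have "\<dots> = (\<Sum>j\<in>UNIV. \<Sum>k\<in>UNIV. \<Sum>i\<in>UNIV. v j * (x i * mpoly_eval (pdiff j (pdiff k (pdiff i p))) x) * v k)"
        by (rule sum.cong[OF refl]) (rule sum.swap)
      finally show ?thesis .
    qed
    also have "\<dots> = (\<Sum>j\<in>UNIV. \<Sum>k\<in>UNIV. v j * (\<Sum>i\<in>UNIV. x i * mpoly_eval (pdiff j (pdiff k (pdiff i p))) x) * v k)"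
      by (simp add: sum_distrib_left sum_distrib_right)
    also have "\<dots> = real (d - 1) * bil H v v" unfolding E3 bil_def by (simp add: sum_distrib_left mult_ac)
    finally show ?thesis .
  qed
  have h1: "bil (B i) x v = real (d - 1) * hv H v i" if "i \<in> A" for i v
  proof -
    have "bil (B i) x v = real (d - 1) * (\<Sum>k\<in>UNIV. mpoly_eval (pdiff k (q i)) x * v k)"
      unfolding B_def pq[OF that] q_def by (rule bil_x_left[OF bsupp_cp homog_cp])
    also have "(\<Sum>k\<in>UNIV. mpoly_eval (pdiff k (q i)) x * v k) = hv H v i"
      unfolding hv_def H_def using Hm_sym unfolding Hm_def pq[OF that, symmetric] by (metis (no_types))
    finally show ?thesis .
  qed
  have B0: "bil (B i) v v = 0" if "i \<notin> A" for i v
    unfolding B_def p0[OF that] Hm_def bil_def by simp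
  have ineq: "x i * bil (B i) v v \<le> real (d - 1) * (x i * (hv H v i)^2 / hv H x i)" if "i \<in> A" for i v
  proof -
    have R: "bil (B i) v v * bil (B i) x x \<le> (bil (B i) x v)^2"
      using Suc.IH[OF vq sq[OF that] x] unfolding RCS_def B_def pq[OF that] q_def by blast
    have dp: "real (d - 1) > 0" using Suc.hyps by simp
    have yp: "hv H x i > 0" by (rule ypos[OF that])
    have "bil (B i) v v * (real (d - 1) * hv H x i) \<le> (real (d - 1) * hv H v i)^2"
      using R unfolding h1[OF that] .
    hence "real (d - 1) * (bil (B i) v v * hv H x i) \<le> real (d - 1) * (real (d - 1) * (hv H v i)^2)"
      by (simp add: power2_eq_square algebra_simps)
    hence "bil (B i) v v * hv H x i \<le> real (d - 1) * (hv H v i)^2" using dp by simp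
    hence "bil (B i) v v \<le> real (d - 1) * (hv H v i)^2 / hv H x i" using yp by (simp add: pos_le_divide_eq)
    hence "x i * bil (B i) v v \<le> x i * (real (d - 1) * (hv H v i)^2 / hv H x i)"
      using x[of i] by (intro mult_left_mono) auto
    thus ?thesis by (simp add: algebra_simps)
  qed
  have hash: "bil H v v \<le> (\<Sum>i\<in>A. x i * (hv H v i)^2 / hv H x i)" for v
  proof -
    have "real (d - 1) * bil H v v = (\<Sum>i\<in>UNIV. x i * bil (B i) v v)" by (rule h3[symmetric])
    also have "\<dots> = (\<Sum>i\<in>A. x i * bil (B i) v v)"
      by (rule sum.mono_neutral_right) (auto simp: B0)
    also have "\<dots> \<le> (\<Sum>i\<in>A. real (d - 1) * (x i * (hv H v i)^2 / hv H x i))"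
      by (rule sum_mono) (rule ineq)
    also have "\<dots> = real (d - 1) * (\<Sum>i\<in>A. x i * (hv H v i)^2 / hv H x i)" by (simp add: sum_distrib_left)
    finally show ?thesis using Suc.hyps by (simp add: mult_le_cancel_left_pos)
  qed
  show ?case unfolding RCS_def p_def[symmetric] H_def[symmetric]
    using matrix_lemma[OF symH zeroH posH x ypos hash] by blast
qed

lemma lc_cp:
  fixes u :: "'m::finite \<Rightarrow> nat"
  assumes vl: "valid C w"
  shows "log_concave_poly (cp C d u w)"
proof (cases "sum u UNIV < d")
  case True thus ?thesis unfolding log_concave_poly_def cp_zero[OF True] by simp
next
  case False
  hence dle: "d \<le> sum u UNIV" by simp
  have "\<forall>x. (\<forall>j. 0 < x j) \<longrightarrow> 0 < mpoly_eval (cp C d u w) x \<and> neg_semidef (hess_log (cp C d u w) x)"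
  proof (intro allI impI conjI)
    fix x :: "'m \<Rightarrow> real" assume x: "\<forall>j. 0 < x j"
    show P: "0 < mpoly_eval (cp C d u w) x" using eval_cp_pos[OF vl dle] x by blast
    show "neg_semidef (hess_log (cp C d u w) x)"
      by (rule lc_from_rcs[OF bsupp_cp homog_cp P]) (use rcs_cp vl dle x in blast)
  qed
  thus ?thesis unfolding log_concave_poly_def by blast
qed

lemma fact_poch: "(fact (a + b) :: real) = fact a * pochhammer (real a + 1) b"
  using pochhammer_product'[of "1::real" a b] by (simp add: pochhammer_fact add.commute)

lemma pdiffs_cp:
  fixes u :: "'m::finite \<Rightarrow> nat"
  shows "pdiffs \<beta> (cp C d u w) = (if (\<forall>e. \<beta> e \<le> u e) \<and> sum \<beta> UNIV \<le> d
     then cp C (d - sum \<beta> UNIV) (\<lambda>e. u e - \<beta> e) (\<lambda>e j. w e (j + \<beta> e)) else (\<lambda>_. 0))"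
proof (cases "(\<forall>e. \<beta> e \<le> u e) \<and> sum \<beta> UNIV \<le> d")
  case True
  hence bu: "\<And>e. \<beta> e \<le> u e" and bd: "sum \<beta> UNIV \<le> d" by auto
  have "pdiffs \<beta> (cp C d u w) \<alpha> = cp C (d - sum \<beta> UNIV) (\<lambda>e. u e - \<beta> e) (\<lambda>e j. w e (j + \<beta> e)) \<alpha>" for \<alpha>
  proof -
    have c1: "(\<forall>e. \<alpha> e + \<beta> e \<le> u e) \<longleftrightarrow> (\<forall>e. \<alpha> e \<le> u e - \<beta> e)" using bu by (meson le_diff_conv2)
    have s: "sum (\<lambda>j. \<alpha> j + \<beta> j) UNIV = sum \<alpha> UNIV + sum \<beta> UNIV" by (rule sum.distrib)
    have c2: "sum (\<lambda>j. \<alpha> j + \<beta> j) UNIV = d \<longleftrightarrow> sum \<alpha> UNIV = d - sum \<beta> UNIV" unfolding s using bd by auto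
    have val: "(\<Prod>j\<in>UNIV. pochhammer (real (\<alpha> j + 1)) (\<beta> j)) * (C * (\<Prod>e\<in>UNIV. w e (\<alpha> e + \<beta> e) / fact (\<alpha> e + \<beta> e)))
       = C * (\<Prod>e\<in>UNIV. w e (\<alpha> e + \<beta> e) / fact (\<alpha> e))"
    proof -
      have "(\<Prod>j\<in>UNIV. pochhammer (real (\<alpha> j + 1)) (\<beta> j)) * (\<Prod>e\<in>UNIV. w e (\<alpha> e + \<beta> e) / fact (\<alpha> e + \<beta> e))
          = (\<Prod>e\<in>UNIV. pochhammer (real (\<alpha> e + 1)) (\<beta> e) * (w e (\<alpha> e + \<beta> e) / fact (\<alpha> e + \<beta> e)))"
        by (rule prod.distrib[symmetric])
      also have "\<dots> = (\<Prod>e\<in>UNIV. w e (\<alpha> e + \<beta> e) / fact (\<alpha> e))"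
      proof (intro prod.cong refl)
        fix e
        have pz: "pochhammer (real (\<alpha> e) + 1) (\<beta> e) \<noteq> (0::real)"
          by (simp add: pochhammer_eq_0_iff)
        show "pochhammer (real (\<alpha> e + 1)) (\<beta> e) * (w e (\<alpha> e + \<beta> e) / fact (\<alpha> e + \<beta> e)) = w e (\<alpha> e + \<beta> e) / fact (\<alpha> e)"
          unfolding fact_poch using pz by (simp add: field_simps)
      qed
      finally show ?thesis by (simp add: algebra_simps)
    qed
    show ?thesis
    proof (cases "(\<forall>e. \<alpha> e \<le> u e - \<beta> e) \<and> sum \<alpha> UNIV = d - sum \<beta> UNIV")
      case T: True
      hence h: "(\<forall>e. \<alpha> e + \<beta> e \<le> u e) \<and> sum (\<lambda>j. \<alpha> j + \<beta> j) UNIV = d" using c1 c2 by blast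
      show ?thesis unfolding pdiffs_def cp_def if_P[OF h] if_P[OF T] using val by simp
    next
      case F: False
      hence h: "\<not> ((\<forall>e. \<alpha> e + \<beta> e \<le> u e) \<and> sum (\<lambda>j. \<alpha> j + \<beta> j) UNIV = d)" using c1 c2 by blast
      show ?thesis unfolding pdiffs_def cp_def if_not_P[OF h] if_not_P[OF F] by simp
    qed
  qed
  thus ?thesis using True by auto
next
  case False
  have "pdiffs \<beta> (cp C d u w) \<alpha> = 0" for \<alpha>
  proof -
    have "\<not> ((\<forall>e. \<alpha> e + \<beta> e \<le> u e) \<and> sum (\<lambda>j. \<alpha> j + \<beta> j) UNIV = d)"
    proof
      assume h: "(\<forall>e. \<alpha> e + \<beta> e \<le> u e) \<and> sum (\<lambda>j. \<alpha> j + \<beta> j) UNIV = d"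
      hence "\<forall>e. \<beta> e \<le> u e" by (meson add_leE)
      moreover have "sum \<beta> UNIV \<le> d" using h by (simp add: sum.distrib)
      ultimately show False using False by simp
    qed
    note h = this
    show ?thesis unfolding pdiffs_def cp_def if_not_P[OF h] by simp
  qed
  thus ?thesis using False by auto
qed

lemma valid_shiftb: "valid C w \<Longrightarrow> valid C (\<lambda>e j. w e (j + \<beta> e))"
  unfolding valid_def by (auto simp: add.commute add.left_commute)

lemma slc_cp:
  fixes u :: "'m::finite \<Rightarrow> nat"
  assumes vl: "valid C w"
  shows "strongly_log_concave (cp C d u w)"
  unfolding strongly_log_concave_def
proof
  fix \<beta> :: "'m \<Rightarrow> nat"
  show "log_concave_poly (pdiffs \<beta> (cp C d u w))"
  proof (cases "(\<forall>e. \<beta> e \<le> u e) \<and> sum \<beta> UNIV \<le> d")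
    case True thus ?thesis unfolding pdiffs_cp using lc_cp[OF valid_shiftb[OF vl]] by simp
  next
    case False thus ?thesis unfolding pdiffs_cp if_not_P[OF False] log_concave_poly_def by simp
  qed
qed

theorem mainTheorem9:
  fixes k :: "'n::finite \<Rightarrow> nat" and u :: "'m::finite \<Rightarrow> nat"
    and T :: real and c :: "'m \<Rightarrow> nat \<Rightarrow> real"
  assumes "\<And>i. 1 \<le> k i"
    and "0 \<le> T"
    and "\<And>e. mono (c e)"
  shows "strongly_log_concave (cong_poly k u T c)"
proof -
  define K where "K = (\<Sum>i\<in>UNIV. k i)"
  define K2 where "K2 = (\<Sum>i\<in>UNIV. real (k i) * (real (k i) - 1))"
  define a where "a = K2 / (real K)^2"
  define S where "S = (\<lambda>e j. \<Sum>i=1..j. c e i)"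
  define w0 where "w0 = (\<lambda>e j. exp (- (a * (real j * (real j - 1))) - T * S e j))"
  define C0 :: real where "C0 = fact K / (\<Prod>i\<in>UNIV. fact (k i))"
  have K2nn: "K2 \<ge> 0" unfolding K2_def using assms(1) by (intro sum_nonneg) (simp add: mult_nonneg_nonneg)
  have ann: "a \<ge> 0" unfolding a_def using K2nn by simp
  have eq: "cong_poly k u T c = cp C0 K u w0"
  proof
    fix \<alpha> :: "'m \<Rightarrow> nat"
    show "cong_poly k u T c \<alpha> = cp C0 K u w0 \<alpha>"
    proof (cases "(\<forall>e. \<alpha> e \<le> u e) \<and> (\<Sum>e\<in>UNIV. \<alpha> e) = K")
      case False thus ?thesis unfolding cong_poly_def cp_def Let_def K_def[symmetric] if_not_P[OF False] by simp
    next
      case True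
      define X where "X = (\<Sum>j\<in>UNIV. real (\<alpha> j) * (real (\<alpha> j) - 1))"
      have pw: "(\<Prod>e\<in>UNIV. w0 e (\<alpha> e)) = exp (- a * X) * exp (- T * Phi_bar c \<alpha>)"
      proof -
        have "(\<Prod>e\<in>UNIV. w0 e (\<alpha> e)) = exp (\<Sum>e\<in>UNIV. - (a * (real (\<alpha> e) * (real (\<alpha> e) - 1))) - T * S e (\<alpha> e))"
          unfolding w0_def by (simp add: exp_sum)
        also have "(\<Sum>e\<in>UNIV. - (a * (real (\<alpha> e) * (real (\<alpha> e) - 1))) - T * S e (\<alpha> e)) = - a * X + - T * Phi_bar c \<alpha>"
          unfolding X_def Phi_bar_def S_def by (simp add: sum_subtractf sum_distrib_left sum_negf)
        finally show ?thesis by (simp add: exp_add[symmetric])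
      qed
      have "cp C0 K u w0 \<alpha> = C0 * ((\<Prod>e\<in>UNIV. w0 e (\<alpha> e)) / (\<Prod>e\<in>UNIV. fact (\<alpha> e)))"
        unfolding cp_def using True by (simp add: prod_dividef)
      also have "\<dots> = fact K / ((\<Prod>i\<in>UNIV. fact (k i)) * (\<Prod>e\<in>UNIV. fact (\<alpha> e))) * exp (- a * X) * exp (- T * Phi_bar c \<alpha>)"
        unfolding pw C0_def by (simp add: field_simps)
      also have "\<dots> = cong_poly k u T c \<alpha>"
        unfolding cong_poly_def Let_def K_def[symmetric] K2_def[symmetric] X_def a_def using True by simp
      finally show ?thesis by simp
    qed
  qed
  have vl: "valid C0 w0"
    unfolding valid_def
  proof (intro conjI allI)
    show "0 < C0" unfolding C0_def by (intro divide_pos_pos prod_pos) auto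
    fix e j
    show "0 < w0 e j" unfolding w0_def by simp
    have S1: "S e (Suc n) = S e n + c e (Suc n)" for n unfolding S_def by simp
    have cm: "c e (j + 1) \<le> c e (j + 2)" using assms(3)[of e] by (simp add: monoD)
    have "(- (a * (real j * (real j - 1))) - T * S e j) + (- (a * (real (j+2) * (real (j+2) - 1))) - T * S e (j+2))
        \<le> 2 * (- (a * (real (j+1) * (real (j+1) - 1))) - T * S e (j+1))"
    proof -
      have "S e (j+2) = S e j + c e (j+1) + c e (j+2)" using S1[of "Suc j"] S1[of j] by (simp add: numeral_2_eq_2)
      moreover have "S e (j+1) = S e j + c e (j+1)" using S1[of j] by simp
      moreover have "T * c e (j+1) \<le> T * c e (j+2)" using cm assms(2) by (simp add: mult_left_mono)
      ultimately show ?thesis using ann by (simp add: algebra_simps)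
    qed
    hence "exp ((- (a * (real j * (real j - 1))) - T * S e j) + (- (a * (real (j+2) * (real (j+2) - 1))) - T * S e (j+2)))
        \<le> exp (2 * (- (a * (real (j+1) * (real (j+1) - 1))) - T * S e (j+1)))" by simp
    thus "w0 e j * w0 e (j + 2) \<le> (w0 e (j + 1))^2"
      unfolding w0_def by (simp add: exp_add[symmetric] exp_double[symmetric] del: exp_le_cancel_iff)
  qed
  show ?thesis unfolding eq by (rule slc_cp[OF vl])
qed

end
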